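(* Consider the influential bandit problem with $K$ arms, and assume $\max_{i,j}|A_{ij}|\le 1$ and $|\xi^{(t)}|\le1$ for all $t$. Then for every horizon $T\ge K+1$ and every realization of the noise, the Influential LCB algorithm satisfies $$\sum_{t=1}^T l^{(t)}_{i^{(t)}}-\min_{(j_1,\dots,j_T)\in[K]^T}\sum_{t=1}^T l^{(t)}_{j_t}\;\le\;\Big(\tfrac{5K+3}{2}+2\|l^{(1)}\|_\infty\Big)T+\big(2K+2\|l^{(1)}\|_\infty+4\big)\,T\log T,$$ i.e. the regret is $O(KT\log T)$ (natural logarithm).
   Context: Influential bandit problem: there are $K$ arms, an unknown symmetric positive semi-definite interaction matrix $A\in\mathbb{R}^{K\times K}$ and an unknown initial loss vector $l^{(1)}\in\mathbb{R}^K$. At each round $t=1,\dots,T$ the algorithm chooses $i^{(t)}\in[K]$ based on past observations, observes $L^{(t)}=l^{(t)}_{i^{(t)}}+\xi^{(t)}$, and then $l^{(t+1)}_j=l^{(t)}_j+A_{i^{(t)}j}$ for all $j\in[K]$; in the minimum the losses evolve under the same dynamics driven by $j_1,\dots,j_T$. Influential LCB algorithm: initialize $c^{(1)}_i=0$ and $\hat l^{(1)}_i=-\infty$ for all $i\in[K]$. At round $t$, choose $i^{(t)}\in\arg\min_{i\in[K]}(\hat l^{(t)}_i-c^{(t)}_i)$ (any tie-breaking), observe $L^{(t)}$, and set $\hat l^{(t+1)}_{i^{(t)}}=L^{(t)}$, $\hat l^{(t+1)}_i=\hat l^{(t)}_i$ for $i\ne i^{(t)}$; $c^{(t+1)}_{i^{(t)}}=1$,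 $c^{(t+1)}_i=c^{(t)}_i+1$ for $i\ne i^{(t)}$. *)

theory Defs
  imports "HOL-Analysis.Analysis"
begin

text \<open>Arms are the naturals 0,...,K-1. Rounds are numbered 1,2,3,...
  A sequence of pulled arms is a function js :: nat => nat (js t = arm pulled at round t).\<close>

definition sym_psd :: "nat \<Rightarrow> (nat \<Rightarrow> nat \<Rightarrow> real) \<Rightarrow> bool" where
  "sym_psd K A \<longleftrightarrow> (\<forall>i<K. \<forall>j<K. A i j = A j i) \<and>
     (\<forall>x :: nat \<Rightarrow> real. 0 \<le> (\<Sum>i<K. \<Sum>j<K. x i * A i j * x j))"

text \<open>Loss vector at round t (t >= 1) when the arms js 1, js 2, ... are pulled:
  l^(t)_j = l^(1)_j + sum_{s=1}^{t-1} A_{js s, j}, i.e. the closed form of the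
  recursion l^(t+1)_j = l^(t)_j + A_{js t, j}.\<close>
definition loss :: "(nat \<Rightarrow> real) \<Rightarrow> (nat \<Rightarrow> nat \<Rightarrow> real) \<Rightarrow> (nat \<Rightarrow> nat) \<Rightarrow> nat \<Rightarrow> nat \<Rightarrow> real" where
  "loss l1 A js t j = l1 j + (\<Sum>s\<in>{1..<t}. A (js s) j)"

text \<open>State of Influential LCB after k completed rounds, i.e. the values
  hat l^(k+1) and c^(k+1).  ch = chosen arms, L = observations.\<close>
primrec lcb_est :: "(nat \<Rightarrow> nat) \<Rightarrow> (nat \<Rightarrow> real) \<Rightarrow> nat \<Rightarrow> nat \<Rightarrow> ereal" where
  "lcb_est ch L 0 i = -\<infinity>"
| "lcb_est ch L (Suc k) i = (if i = ch (Suc k) then ereal (L (Suc k)) else lcb_est ch L k i)"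

primrec lcb_cnt :: "(nat \<Rightarrow> nat) \<Rightarrow> nat \<Rightarrow> nat \<Rightarrow> real" where
  "lcb_cnt ch 0 i = 0"
| "lcb_cnt ch (Suc k) i = (if i = ch (Suc k) then 1 else lcb_cnt ch k i + 1)"

definition influential_lcb_run ::
  "nat \<Rightarrow> (nat \<Rightarrow> nat \<Rightarrow> real) \<Rightarrow> (nat \<Rightarrow> real) \<Rightarrow> (nat \<Rightarrow> real) \<Rightarrow> nat \<Rightarrow> (nat \<Rightarrow> nat) \<Rightarrow> bool" where
  "influential_lcb_run K A l1 \<xi> T ch \<longleftrightarrow>
     (let L = (\<lambda>t. loss l1 A ch t (ch t) + \<xi> t) in
      \<forall>t\<in>{1..T}. ch t < K \<and>
        (\<forall>i<K. lcb_est ch L (t - 1) (ch t) - ereal (lcb_cnt ch (t - 1) (ch t))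
               \<le> lcb_est ch L (t - 1) i - ereal (lcb_cnt ch (t - 1) i)))"

definition regret ::
  "nat \<Rightarrow> (nat \<Rightarrow> nat \<Rightarrow> real) \<Rightarrow> (nat \<Rightarrow> real) \<Rightarrow> nat \<Rightarrow> (nat \<Rightarrow> nat) \<Rightarrow> real" where
  "regret K A l1 T ch =
     (\<Sum>t=1..T. loss l1 A ch t (ch t))
     - Min ((\<lambda>js. \<Sum>t=1..T. loss l1 A js t (js t)) ` (PiE {1..T} (\<lambda>_. {..<K})))"

definition sup_norm :: "nat \<Rightarrow> (nat \<Rightarrow> real) \<Rightarrow> real" where
  "sup_norm K v = Max ((\<lambda>i. \<bar>v i\<bar>) ` {..<K})"

end

theory Submission
  imports Defs
begin

definition Qf :: "nat \<Rightarrow> (nat \<Rightarrow> nat \<Rightarrow> real) \<Rightarrow> (nat \<Rightarrow> real) \<Rightarrow> real" where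
  "Qf K A x = (\<Sum>i<K. \<Sum>j<K. x i * A i j * x j)"

definition W :: "nat \<Rightarrow> (nat \<Rightarrow> nat \<Rightarrow> real) \<Rightarrow> (nat \<Rightarrow> real) \<Rightarrow> (nat \<Rightarrow> real) \<Rightarrow> real" where
  "W K A l1 x = (\<Sum>i<K. l1 i * x i) + Qf K A x / 2 - (\<Sum>i<K. A i i * x i) / 2"

lemma Qf_scale: "Qf K A (\<lambda>j. c * x j) = c^2 * Qf K A x"
  unfolding Qf_def by (simp add: sum_distrib_left power2_eq_square mult_ac)

lemma W_scale: "W K A l1 (\<lambda>j. c * x j) = c * (\<Sum>i<K. l1 i * x i) + c^2 * Qf K A x / 2 - c * (\<Sum>i<K. A i i * x i) / 2"
  unfolding W_def Qf_scale by (simp add: sum_distrib_left mult_ac)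

lemma sum_ind: "i < (K::nat) \<Longrightarrow> (\<Sum>j<K. f j * (if i = j then 1 else 0)) = (f i :: real)"
proof -
  assume "i < K"
  have "(\<Sum>j<K. f j * (if i = j then 1 else 0)) = (\<Sum>j<K. if i = j then f j else 0)"
    by (intro sum.cong) auto
  also have "\<dots> = f i" using \<open>i < K\<close> by simp
  finally show ?thesis .
qed

lemma sum_ind2: "i < (K::nat) \<Longrightarrow> (\<Sum>j<K. (if i = j then 1 else 0) * f j) = (f i :: real)"
  using sum_ind[of i K f] by (simp add: mult.commute)

lemma sum_ind3: "i < (K::nat) \<Longrightarrow> (\<Sum>a<K. \<Sum>b<K. (if i = a then 1 else 0) * g a b) = (\<Sum>b<K. g i b :: real)"
proof -
  assume iK: "i < K"
  have "(\<Sum>a<K. \<Sum>b<K. (if i = a then 1 else 0) * g a b) = (\<Sum>a<K. (if i = a then 1 else 0) * (\<Sum>b<K. g a b))"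
    by (simp add: sum_distrib_left)
  also have "\<dots> = (\<Sum>b<K. g i b)" using sum_ind2[OF iK, of "\<lambda>a. \<Sum>b<K. g a b"] .
  finally show ?thesis .
qed

lemma W_step:
  assumes sym: "\<forall>i<K. \<forall>j<K. A i j = A j i" and iK: "i < K"
  shows "W K A l1 (\<lambda>j. x j + (if i = j then 1 else 0)) = W K A l1 x + l1 i + (\<Sum>k<K. x k * A k i)"
proof -
  let ?d = "\<lambda>j. (if i = j then 1 else 0) :: real"
  have q: "Qf K A (\<lambda>j. x j + ?d j) = Qf K A x + (\<Sum>a<K. x a * A a i) + (\<Sum>b<K. A i b * x b) + A i i"
  proof -
    have "Qf K A (\<lambda>j. x j + ?d j) = (\<Sum>a<K. \<Sum>b<K. x a * A a b * x b + x a * A a b * ?d b + ?d a * A a b * x b + ?d a * A a b * ?d b)"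
      unfolding Qf_def by (intro sum.cong refl) (simp add: algebra_simps)
    also have "\<dots> = Qf K A x + (\<Sum>a<K. \<Sum>b<K. x a * A a b * ?d b) + (\<Sum>a<K. \<Sum>b<K. ?d a * (A a b * x b)) + (\<Sum>a<K. \<Sum>b<K. ?d a * (A a b * ?d b))"
      unfolding Qf_def by (simp add: sum.distrib mult.assoc)
    also have "\<dots> = Qf K A x + (\<Sum>a<K. x a * A a i) + (\<Sum>b<K. A i b * x b) + A i i"
      using iK by (simp add: sum_ind sum_ind3[OF iK, of "\<lambda>a b. A a b * x b"] sum_ind3[OF iK, of "\<lambda>a b. A a b * ?d b"])
    finally show ?thesis .
  qed
  have s: "(\<Sum>b<K. A i b * x b) = (\<Sum>a<K. x a * A a i)"
    using sym iK by (intro sum.cong refl) simp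
  have l: "(\<Sum>j<K. l1 j * (x j + ?d j)) = (\<Sum>j<K. l1 j * x j) + l1 i"
    using iK by (simp add: distrib_left sum.distrib sum_ind)
  have dd: "(\<Sum>j<K. A j j * (x j + ?d j)) = (\<Sum>j<K. A j j * x j) + A i i"
    using iK by (simp add: distrib_left sum.distrib sum_ind)
  show ?thesis unfolding W_def q l dd s by (simp add: field_simps)
qed

lemma step_alg:
  fixes A :: "nat \<Rightarrow> nat \<Rightarrow> real" and l1 N y :: "nat \<Rightarrow> real" and s B E :: real
  assumes sym: "\<forall>i<K. \<forall>j<K. A i j = A j i"
    and psd: "\<forall>x. 0 \<le> Qf K A x"
    and Ab: "\<forall>i<K. \<forall>j<K. \<bar>A i j\<bar> \<le> 1"
    and lb: "\<forall>i<K. \<bar>l1 i\<bar> \<le> B"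
    and y0: "\<forall>i<K. 0 \<le> y i" and y1: "(\<Sum>i<K. y i) = 1"
    and N0: "\<forall>i<K. 0 \<le> N i" and Ns: "(\<Sum>i<K. N i) = s"
    and s0: "0 \<le> s" and iK: "i < K"
    and li: "l1 i + (\<Sum>k<K. N k * A k i) \<le> (\<Sum>j<K. y j * (l1 j + (\<Sum>k<K. N k * A k j))) + E"
  shows "s * (W K A l1 (\<lambda>j. N j + (if i = j then 1 else 0)) - W K A l1 (\<lambda>j. (s+1) * y j))
     \<le> (s+1) * (W K A l1 N - W K A l1 (\<lambda>j. s * y j)) + s * (2*B + 3/2 + E)"
proof -
  define lN where "lN = (\<Sum>j<K. l1 j * N j)"
  define dN where "dN = (\<Sum>j<K. A j j * N j)"
  define ly where "ly = (\<Sum>j<K. l1 j * y j)"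
  define dy where "dy = (\<Sum>j<K. A j j * y j)"
  define QN where "QN = Qf K A N"
  define QY where "QY = Qf K A y"
  define BNy where "BNy = (\<Sum>a<K. \<Sum>b<K. N a * A a b * y b)"
  define li' where "li' = l1 i + (\<Sum>k<K. N k * A k i)"
  have WN: "W K A l1 N = lN + QN/2 - dN/2" unfolding W_def lN_def QN_def dN_def by simp
  have WM: "W K A l1 (\<lambda>j. N j + (if i = j then 1 else 0)) = W K A l1 N + li'"
    unfolding li'_def using W_step[OF sym iK] by simp
  have Wc: "\<And>c. W K A l1 (\<lambda>j. c * y j) = c * ly + c^2 * QY / 2 - c * dy / 2"
    unfolding ly_def QY_def dy_def by (rule W_scale)
  have avg: "(\<Sum>j<K. y j * (l1 j + (\<Sum>k<K. N k * A k j))) = ly + BNy"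
  proof -
    have "(\<Sum>j<K. y j * (l1 j + (\<Sum>k<K. N k * A k j))) = ly + (\<Sum>j<K. \<Sum>k<K. N k * A k j * y j)"
      unfolding ly_def by (simp add: distrib_left sum.distrib sum_distrib_left mult_ac)
    also have "(\<Sum>j<K. \<Sum>k<K. N k * A k j * y j) = BNy" unfolding BNy_def by (rule sum.swap)
    finally show ?thesis .
  qed
  have psdN: "0 \<le> QN - 2 * s * BNy + s^2 * QY"
  proof -
    have "0 \<le> Qf K A (\<lambda>j. N j - s * y j)" using psd by blast
    also have "Qf K A (\<lambda>j. N j - s * y j) = QN - s * BNy - s * (\<Sum>a<K. \<Sum>b<K. y a * A a b * N b) + s^2 * QY"
      unfolding QN_def QY_def BNy_def Qf_def
      by (simp add: algebra_simps sum.distrib sum_subtractf sum_distrib_left power2_eq_square)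
    also have "(\<Sum>a<K. \<Sum>b<K. y a * A a b * N b) = BNy"
    proof -
      have "(\<Sum>a<K. \<Sum>b<K. y a * A a b * N b) = (\<Sum>b<K. \<Sum>a<K. y a * A a b * N b)" by (rule sum.swap)
      also have "\<dots> = BNy" unfolding BNy_def using sym
        by (intro sum.cong refl) (simp add: mult_ac)
      finally show ?thesis .
    qed
    finally show ?thesis by (simp add: algebra_simps)
  qed
  have QY0: "0 \<le> QY" unfolding QY_def using psd by blast
  have dy1: "dy \<le> 1"
  proof -
    have "dy \<le> (\<Sum>j<K. 1 * y j)" unfolding dy_def
      using Ab y0 by (intro sum_mono mult_right_mono) (auto simp: abs_le_iff)
    thus ?thesis using y1 by simp
  qed
  have dym: "-1 \<le> dy"
  proof -
    have "(\<Sum>j<K. (-1) * y j) \<le> dy" unfolding dy_def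
      using Ab y0 by (intro sum_mono mult_right_mono) (auto simp: abs_le_iff)
    thus ?thesis using y1 by (simp add: sum_negf)
  qed
  have lyB: "ly \<le> B"
  proof -
    have "ly \<le> (\<Sum>j<K. B * y j)" unfolding ly_def
      using lb y0 by (intro sum_mono mult_right_mono) (auto simp: abs_le_iff)
    thus ?thesis using y1 by (simp add: sum_distrib_left[symmetric])
  qed
  have lNB: "- B * s \<le> lN"
  proof -
    have "(\<Sum>j<K. (-B) * N j) \<le> lN" unfolding lN_def
      using lb N0 by (intro sum_mono mult_right_mono) (auto simp: abs_le_iff)
    thus ?thesis using Ns by (simp add: sum_negf sum_distrib_left[symmetric])
  qed
  have dNs: "dN \<le> s"
  proof -
    have "dN \<le> (\<Sum>j<K. 1 * N j)" unfolding dN_def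
      using Ab N0 by (intro sum_mono mult_right_mono) (auto simp: abs_le_iff)
    thus ?thesis using Ns by simp
  qed
  have lis: "s * li' \<le> s * ly + s * BNy + s * E"
    using li s0 unfolding li'_def avg by (metis distrib_left mult_left_mono)
  have psd2: "2 * (s * BNy) \<le> QN + s^2 * QY" using psdN by simp
  have p3: "s * ly \<le> s * B" using lyB s0 by (simp add: mult_left_mono)
  have p4: "0 \<le> s * QY" using QY0 s0 by simp
  have lNB': "- (s * B) \<le> lN" using lNB by (simp add: mult.commute)
  let ?L = "s * (W K A l1 (\<lambda>j. N j + (if i = j then 1 else 0)) - W K A l1 (\<lambda>j. (s+1) * y j))"
  let ?R = "(s+1) * (W K A l1 N - W K A l1 (\<lambda>j. s * y j)) + s * (2*B + 3/2 + E)"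
  have eq: "?R - ?L = lN + QN/2 - dN/2 + 2*(s*B) + 3/2 * s + s * E - s * li' + (s^2 * QY)/2 + (s * QY)/2"
    unfolding WM WN Wc by (simp add: field_simps power2_eq_square)
  have "0 \<le> ?R - ?L" unfolding eq using lis psd2 p3 p4 lNB' dNs s0 by linarith
  thus ?thesis by simp
qed

fun cnt :: "(nat \<Rightarrow> nat) \<Rightarrow> nat \<Rightarrow> nat \<Rightarrow> real" where
  "cnt js 0 i = 0"
| "cnt js (Suc t) i = cnt js t i + (if js (Suc t) = i then 1 else 0)"

lemma cnt_nonneg: "0 \<le> cnt js t i"
  by (induction t) auto

lemma cnt_sum: "\<forall>s\<in>{1..t}. js s < K \<Longrightarrow> (\<Sum>i<K. cnt js t i) = real t"
proof (induction t)
  case 0 then show ?case by simp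
next
  case (Suc t)
  have "js (Suc t) < K" using Suc.prems by auto
  moreover have "(\<Sum>i<K. cnt js t i) = real t" using Suc by auto
  ultimately show ?case by (simp add: sum.distrib)
qed

lemma loss_cnt: "\<forall>s\<in>{1..t}. js s < K \<Longrightarrow>
    loss l1 A js (Suc t) j = l1 j + (\<Sum>k<K. cnt js t k * A k j)"
proof (induction t)
  case 0 then show ?case by (simp add: loss_def)
next
  case (Suc t)
  have jK: "js (Suc t) < K" using Suc.prems by auto
  have IH: "loss l1 A js (Suc t) j = l1 j + (\<Sum>k<K. cnt js t k * A k j)" using Suc by auto
  have "(\<Sum>k<K. cnt js (Suc t) k * A k j) = (\<Sum>k<K. cnt js t k * A k j) + (\<Sum>k<K. (if js (Suc t) = k then 1 else 0) * A k j)"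
    by (simp add: distrib_right sum.distrib)
  also have "(\<Sum>k<K. (if js (Suc t) = k then 1 else 0) * A k j) = A (js (Suc t)) j"
    using sum_ind2[OF jK] .
  finally have "(\<Sum>k<K. cnt js (Suc t) k * A k j) = (\<Sum>k<K. cnt js t k * A k j) + A (js (Suc t)) j" .
  moreover have "loss l1 A js (Suc (Suc t)) j = loss l1 A js (Suc t) j + A (js (Suc t)) j"
    by (simp add: loss_def)
  ultimately show ?case using IH by simp
qed

lemma W_zero: "W K A l1 (\<lambda>i. 0) = 0"
  unfolding W_def Qf_def by simp

lemma sum_loss_W:
  assumes sym: "\<forall>i<K. \<forall>j<K. A i j = A j i"
  shows "\<forall>s\<in>{1..t}. js s < K \<Longrightarrow> (\<Sum>s=1..t. loss l1 A js s (js s)) = W K A l1 (cnt js t)"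
proof (induction t)
  case 0
  have "cnt js 0 = (\<lambda>i. 0)" by auto
  then show ?case by (simp add: W_zero)
next
  case (Suc t)
  have jK: "js (Suc t) < K" using Suc.prems by auto
  have IH: "(\<Sum>s=1..t. loss l1 A js s (js s)) = W K A l1 (cnt js t)" using Suc by auto
  have c: "cnt js (Suc t) = (\<lambda>j. cnt js t j + (if js (Suc t) = j then 1 else 0))" by auto
  have e: "(\<Sum>s=1..Suc t. loss l1 A js s (js s)) = (\<Sum>s=1..t. loss l1 A js s (js s)) + loss l1 A js (Suc t) (js (Suc t))" by simp
  have "W K A l1 (cnt js (Suc t)) = W K A l1 (cnt js t) + l1 (js (Suc t)) + (\<Sum>k<K. cnt js t k * A k (js (Suc t)))"
    unfolding c by (rule W_step[OF sym jK])
  also have "\<dots> = W K A l1 (cnt js t) + loss l1 A js (Suc t) (js (Suc t))"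
    using loss_cnt[of t js K l1 A "js (Suc t)"] Suc.prems by simp
  finally have f: "W K A l1 (cnt js (Suc t)) = W K A l1 (cnt js t) + loss l1 A js (Suc t) (js (Suc t))" .
  show ?case using e IH f by linarith
qed

primrec lp :: "(nat \<Rightarrow> nat) \<Rightarrow> nat \<Rightarrow> nat \<Rightarrow> nat" where
  "lp ch 0 i = 0"
| "lp ch (Suc k) i = (if ch (Suc k) = i then Suc k else lp ch k i)"

lemma lp_le: "lp ch k i \<le> k"
  by (induction k) auto

lemma lp_ch: "lp ch k i \<noteq> 0 \<Longrightarrow> ch (lp ch k i) = i"
  by (induction k) auto

lemma lp_zero: "lp ch k i = 0 \<longleftrightarrow> (\<forall>s\<in>{1..k}. ch s \<noteq> i)"
proof (induction k)
  case 0 then show ?case by simp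
next
  case (Suc k) then show ?case by (auto simp: le_Suc_eq) (metis atLeastAtMost_iff le_refl Suc_le_mono le0)
qed

lemma est_lp: "lcb_est ch L k i = (if lp ch k i = 0 then -\<infinity> else ereal (L (lp ch k i)))"
  by (induction k) auto

lemma cntl_lp: "lcb_cnt ch k i = (if lp ch k i = 0 then real k else real k + 1 - real (lp ch k i))"
  by (induction k) auto

lemma loss_diff:
  assumes "1 \<le> \<tau>" "\<tau> \<le> t" "\<forall>s\<in>{1..<t}. ch s < K" "i < K" "\<forall>i<K. \<forall>j<K. \<bar>A i j\<bar> \<le> 1"
  shows "\<bar>loss l1 A ch t i - loss l1 A ch \<tau> i\<bar> \<le> real (t - \<tau>)"
proof -
  have "loss l1 A ch t i - loss l1 A ch \<tau> i = (\<Sum>s\<in>{\<tau>..<t}. A (ch s) i)"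
    unfolding loss_def using sum.atLeastLessThan_concat[of 1 \<tau> t "\<lambda>s. A (ch s) i"] assms(1,2) by simp
  also have "\<bar>\<dots>\<bar> \<le> (\<Sum>s\<in>{\<tau>..<t}. \<bar>A (ch s) i\<bar>)" by (rule sum_abs)
  also have "\<dots> \<le> of_nat (card {\<tau>..<t}) * 1"
    using assms by (intro sum_bounded_above) auto
  finally show ?thesis by simp
qed

lemma loss_bound:
  assumes "\<forall>s\<in>{1..<t}. ch s < K" "i < K" "\<forall>i<K. \<forall>j<K. \<bar>A i j\<bar> \<le> 1" "\<bar>l1 i\<bar> \<le> B"
  shows "loss l1 A ch t i \<le> B + real (t - 1)"
proof -
  have "(\<Sum>s\<in>{1..<t}. A (ch s) i) \<le> of_nat (card {1..<t}) * 1"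
    using assms by (intro sum_bounded_above) (auto simp: abs_le_iff)
  then show ?thesis unfolding loss_def using assms(4) by simp
qed

lemma ln_diff_ge:
  fixes a b :: real assumes "0 < a" "a \<le> b"
  shows "(b - a) / b \<le> ln b - ln a"
proof -
  have b: "0 < b" using assms by simp
  have "ln (a / b) \<le> a / b - 1" using assms b by (intro ln_le_minus_one) simp
  moreover have "ln (a / b) = ln a - ln b" using assms b by (simp add: ln_div)
  moreover have "(b - a) / b = 1 - a / b" using b by (simp add: field_simps)
  ultimately show ?thesis by linarith
qed

lemma W_lower:
  fixes A :: "nat \<Rightarrow> nat \<Rightarrow> real" and l1 y :: "nat \<Rightarrow> real" and B c :: real
  assumes psd: "\<forall>x. 0 \<le> Qf K A x"
    and Ab: "\<forall>i<K. \<forall>j<K. \<bar>A i j\<bar> \<le> 1"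
    and lb: "\<forall>i<K. \<bar>l1 i\<bar> \<le> B"
    and y0: "\<forall>i<K. 0 \<le> y i" and y1: "(\<Sum>i<K. y i) = 1" and c0: "0 \<le> c"
  shows "- c * (B + 1/2) \<le> W K A l1 (\<lambda>j. c * y j)"
proof -
  have dy1: "(\<Sum>j<K. A j j * y j) \<le> 1"
  proof -
    have "(\<Sum>j<K. A j j * y j) \<le> (\<Sum>j<K. 1 * y j)"
      using Ab y0 by (intro sum_mono mult_right_mono) (auto simp: abs_le_iff)
    thus ?thesis using y1 by simp
  qed
  have ly: "- B \<le> (\<Sum>j<K. l1 j * y j)"
  proof -
    have "(\<Sum>j<K. (-B) * y j) \<le> (\<Sum>j<K. l1 j * y j)"
      using lb y0 by (intro sum_mono mult_right_mono) (auto simp: abs_le_iff)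
    thus ?thesis using y1 by (simp add: sum_negf sum_distrib_left[symmetric])
  qed
  have q: "0 \<le> c^2 * Qf K A y" using psd by simp
  have a1: "c * (- B) \<le> c * (\<Sum>j<K. l1 j * y j)" using ly c0 by (rule mult_left_mono)
  have a2: "c * (\<Sum>j<K. A j j * y j) \<le> c * 1" using dy1 c0 by (rule mult_left_mono)
  show ?thesis unfolding W_scale using q a1 a2 by (simp add: algebra_simps)
qed

lemma early:
  assumes KT: "K \<le> T"
    and chK: "\<forall>t\<in>{1..T}. ch t < K"
    and idx: "\<forall>t\<in>{1..T}. \<forall>i<K. lcb_est ch L (t-1) (ch t) - ereal (lcb_cnt ch (t-1) (ch t))
               \<le> lcb_est ch L (t-1) i - ereal (lcb_cnt ch (t-1) i)"
    and t: "1 \<le> t" "t \<le> K"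
  shows "lp ch (t-1) (ch t) = 0"
proof -
  let ?P = "{i. i < K \<and> lp ch (t-1) i \<noteq> 0}"
  have sub: "?P \<subseteq> ch ` {1..t-1}"
  proof
    fix i assume "i \<in> ?P"
    then have "lp ch (t-1) i \<noteq> 0" "i < K" by auto
    then have "ch (lp ch (t-1) i) = i" "lp ch (t-1) i \<in> {1..t-1}" using lp_ch lp_le by auto
    then show "i \<in> ch ` {1..t-1}" by (metis image_eqI)
  qed
  have "card ?P \<le> card (ch ` {1..t-1})" using sub by (intro card_mono) auto
  also have "\<dots> \<le> card {1..t-1}" by (rule card_image_le) simp
  also have "\<dots> < K" using t by simp
  finally have "card ?P < card {..<K}" by simp
  then have "\<not> {..<K} \<subseteq> ?P"
  proof -
    assume lt: "card ?P < card {..<K}"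
    show ?thesis
    proof
      assume "{..<K} \<subseteq> ?P"
      moreover have "finite ?P" by (rule finite_subset[of _ "{..<K}"]) auto
      ultimately have "card {..<K} \<le> card ?P" by (rule card_mono[rotated])
      with lt show False by simp
    qed
  qed
  then obtain i where "i \<in> {..<K}" "i \<notin> ?P" by blast
  then have iK: "i < K" and i0: "lp ch (t-1) i = 0" by auto
  have tT: "t \<in> {1..T}" using t KT by auto
  have "lcb_est ch L (t-1) (ch t) - ereal (lcb_cnt ch (t-1) (ch t)) \<le> lcb_est ch L (t-1) i - ereal (lcb_cnt ch (t-1) i)"
    using idx tT iK by blast
  also have "\<dots> = -\<infinity>" using i0 by (simp add: est_lp)
  finally show ?thesis by (cases "lp ch (t-1) (ch t) = 0") (auto simp: est_lp)
qed

lemma allpulled: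
  assumes KT: "K \<le> T"
    and chK: "\<forall>t\<in>{1..T}. ch t < K"
    and idx: "\<forall>t\<in>{1..T}. \<forall>i<K. lcb_est ch L (t-1) (ch t) - ereal (lcb_cnt ch (t-1) (ch t))
               \<le> lcb_est ch L (t-1) i - ereal (lcb_cnt ch (t-1) i)"
    and k: "K \<le> k" and iK: "i < K"
  shows "lp ch k i \<noteq> 0"
proof -
  have inj: "inj_on ch {1..K}"
  proof (rule inj_onI)
    fix a b assume a: "a \<in> {1..K}" and b: "b \<in> {1..K}" and e: "ch a = ch b"
    show "a = b"
    proof (rule ccontr)
      assume "a \<noteq> b"
      then consider "a < b" | "b < a" by linarith
      then show False
      proof cases
        case 1
        have "lp ch (b-1) (ch b) = 0" using b by (intro early[OF KT chK idx]) auto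
        then have h: "\<forall>s\<in>{1..b-1}. ch s \<noteq> ch b" using lp_zero[of ch "b-1" "ch b"] by simp
        have "a \<in> {1..b-1}" using 1 a by auto
        then have "ch a \<noteq> ch b" using h by blast
        then show False using e by simp
      next
        case 2
        have "lp ch (a-1) (ch a) = 0" using a by (intro early[OF KT chK idx]) auto
        then have h: "\<forall>s\<in>{1..a-1}. ch s \<noteq> ch a" using lp_zero[of ch "a-1" "ch a"] by simp
        have "b \<in> {1..a-1}" using 2 b by auto
        then have "ch b \<noteq> ch a" using h by blast
        then show False using e by simp
      qed
    qed
  qed
  have "ch ` {1..K} \<subseteq> {..<K}" using chK KT by auto
  moreover have "card (ch ` {1..K}) = card {..<K}" using card_image[OF inj] by simp
  ultimately have "ch ` {1..K} = {..<K}" by (intro card_subset_eq) auto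
  then obtain s where s: "s \<in> {1..K}" "ch s = i" using iK by (metis imageE lessThan_iff)
  show ?thesis using lp_zero[of ch k i] s k by auto
qed

theorem theorem4:
  fixes K T :: nat and A :: "nat \<Rightarrow> nat \<Rightarrow> real" and l1 \<xi> :: "nat \<Rightarrow> real"
    and ch :: "nat \<Rightarrow> nat"
  assumes "K \<ge> 1"
    and "sym_psd K A"
    and "\<forall>i<K. \<forall>j<K. \<bar>A i j\<bar> \<le> 1"
    and "\<forall>t. \<bar>\<xi> t\<bar> \<le> 1"
    and "T \<ge> K + 1"
    and "influential_lcb_run K A l1 \<xi> T ch"
  shows "regret K A l1 T ch
           \<le> ((5 * real K + 3) / 2 + 2 * sup_norm K l1) * real T
             + (2 * real K + 2 * sup_norm K l1 + 4) * real T * ln (real T)"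
proof -
  define L where "L = (\<lambda>t. loss l1 A ch t (ch t) + \<xi> t)"
  have run: "\<forall>t\<in>{1..T}. ch t < K \<and>
        (\<forall>i<K. lcb_est ch L (t - 1) (ch t) - ereal (lcb_cnt ch (t - 1) (ch t))
               \<le> lcb_est ch L (t - 1) i - ereal (lcb_cnt ch (t - 1) i))"
    using assms(6) unfolding influential_lcb_run_def Let_def L_def by blast
  have chK: "\<forall>t\<in>{1..T}. ch t < K" using run by blast
  have idx: "\<forall>t\<in>{1..T}. \<forall>i<K. lcb_est ch L (t-1) (ch t) - ereal (lcb_cnt ch (t-1) (ch t))
               \<le> lcb_est ch L (t-1) i - ereal (lcb_cnt ch (t-1) i)" using run by blast
  have sym: "\<forall>i<K. \<forall>j<K. A i j = A j i" using assms(2) unfolding sym_psd_def by blast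
  have psd: "\<forall>x. 0 \<le> Qf K A x" using assms(2) unfolding sym_psd_def Qf_def by blast
  have Ab: "\<forall>i<K. \<forall>j<K. \<bar>A i j\<bar> \<le> 1" by (rule assms(3))
  define B where "B = sup_norm K l1"
  have lb: "\<forall>i<K. \<bar>l1 i\<bar> \<le> B" unfolding B_def sup_norm_def by (auto intro: Max_ge)
  have B0: "0 \<le> B"
  proof -
    have "\<bar>l1 0\<bar> \<le> B" using lb assms(1) by auto
    thus ?thesis by linarith
  qed
  have KT: "K \<le> T" using assms(5) by simp
  have K0: "0 < K" using assms(1) by simp
  have T0: "0 < T" using KT K0 by simp
  let ?S = "(\<lambda>js. \<Sum>t=1..T. loss l1 A js t (js t)) ` (PiE {1..T} (\<lambda>_. {..<K}))"
  have fin: "finite ?S" by (intro finite_imageI finite_PiE) auto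
  have ne: "?S \<noteq> {}" using K0 by (auto simp: PiE_eq_empty_iff)
  obtain js where js: "js \<in> PiE {1..T} (\<lambda>_. {..<K})"
    and mn: "Min ?S = (\<Sum>t=1..T. loss l1 A js t (js t))"
    using Min_in[OF fin ne] by auto
  have jsK: "\<forall>s\<in>{1..T}. js s < K" using js PiE_mem by fastforce
  define y where "y = (\<lambda>i. cnt js T i / real T)"
  have y0: "\<forall>i<K. 0 \<le> y i" unfolding y_def using cnt_nonneg by simp
  have y1: "(\<Sum>i<K. y i) = 1"
    unfolding y_def using cnt_sum[OF jsK] T0 by (simp add: sum_divide_distrib[symmetric])
  have Ty: "(\<lambda>j. real T * y j) = cnt js T" unfolding y_def using T0 by auto
  have optW: "(\<Sum>t=1..T. loss l1 A js t (js t)) = W K A l1 (\<lambda>j. real T * y j)"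
    unfolding Ty by (rule sum_loss_W[OF sym jsK])
  have algW: "(\<Sum>t=1..T. loss l1 A ch t (ch t)) = W K A l1 (cnt ch T)"
    by (rule sum_loss_W[OF sym chK])
  define e where "e = (\<lambda>t. W K A l1 (cnt ch t) - W K A l1 (\<lambda>j. real t * y j))"
  have reg: "regret K A l1 T ch = e T" unfolding regret_def mn e_def algW optW by simp
  define \<Phi> where "\<Phi> = (\<lambda>t. \<Sum>i<K. ln (real (lp ch t i)))"
  define C where "C = 2 * B + 7/2"
  have C0: "0 \<le> C" using B0 C_def by simp
  have pulled: "\<And>k i. K \<le> k \<Longrightarrow> i < K \<Longrightarrow> lp ch k i \<noteq> 0"
    using allpulled[OF KT chK idx] by blast
  have rec: "\<And>s. K \<le> s \<Longrightarrow> Suc s \<le> T \<Longrightarrow>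
     e (Suc s) / real (Suc s) \<le> e s / real s + C * (ln (real (Suc s)) - ln (real s)) + 2 * (\<Phi> (Suc s) - \<Phi> s)"
  proof -
    fix s assume sK: "K \<le> s" and sT: "Suc s \<le> T"
    define t where "t = Suc s"
    define i where "i = ch t"
    have tT: "t \<in> {1..T}" using sT t_def by auto
    have iK: "i < K" using chK tT i_def by auto
    have chs: "\<forall>u\<in>{1..s}. ch u < K" using chK sT by auto
    have chlt: "\<forall>u\<in>{1..<t}. ch u < K" using chK sT t_def by auto
    define \<tau> where "\<tau> = (\<lambda>j. lp ch s j)"
    have \<tau>1: "\<And>j. j<K \<Longrightarrow> 1 \<le> \<tau> j" using pulled sK \<tau>_def by (simp add: Suc_le_eq)
    have \<tau>s: "\<And>j. \<tau> j \<le> s" using lp_le \<tau>_def by auto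
    have \<tau>ch: "\<And>j. j<K \<Longrightarrow> ch (\<tau> j) = j" using lp_ch pulled sK \<tau>_def by auto
    have est: "\<And>j. j<K \<Longrightarrow> lcb_est ch L s j = ereal (L (\<tau> j))" using est_lp pulled sK \<tau>_def by auto
    have cn: "\<And>j. j<K \<Longrightarrow> lcb_cnt ch s j = real t - real (\<tau> j)" using cntl_lp pulled sK \<tau>_def t_def by auto
    have lossL: "\<And>j. j<K \<Longrightarrow> \<bar>loss l1 A ch t j - L (\<tau> j)\<bar> \<le> real t - real (\<tau> j) + 1"
    proof -
      fix j assume jK: "j < K"
      have Lj: "L (\<tau> j) = loss l1 A ch (\<tau> j) j + \<xi> (\<tau> j)" using \<tau>ch[OF jK] by (simp add: L_def)
      have "\<bar>loss l1 A ch t j - loss l1 A ch (\<tau> j) j\<bar> \<le> real (t - \<tau> j)"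
        using \<tau>1[OF jK] \<tau>s[of j] t_def chlt jK Ab by (intro loss_diff) auto
      moreover have "real (t - \<tau> j) = real t - real (\<tau> j)" using \<tau>s[of j] t_def by (simp add: of_nat_diff)
      moreover have "\<bar>\<xi> (\<tau> j)\<bar> \<le> 1" using assms(4) by blast
      ultimately show "\<bar>loss l1 A ch t j - L (\<tau> j)\<bar> \<le> real t - real (\<tau> j) + 1" unfolding Lj by linarith
    qed
    have key: "\<And>j. j<K \<Longrightarrow> loss l1 A ch t i \<le> loss l1 A ch t j + (2 * (real t - real (\<tau> i)) + 2)"
    proof -
      fix j assume jK: "j < K"
      have h: "lcb_est ch L (t-1) (ch t) - ereal (lcb_cnt ch (t-1) (ch t)) \<le> lcb_est ch L (t-1) j - ereal (lcb_cnt ch (t-1) j)"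
        using idx tT jK by blast
      have ts: "t - 1 = s" by (simp add: t_def)
      have "lcb_est ch L s i - ereal (lcb_cnt ch s i) \<le> lcb_est ch L s j - ereal (lcb_cnt ch s j)"
        using h unfolding ts i_def[symmetric] .
      hence ix: "L (\<tau> i) - (real t - real (\<tau> i)) \<le> L (\<tau> j) - (real t - real (\<tau> j))"
        by (simp add: est[OF iK] est[OF jK] cn[OF iK] cn[OF jK])
      show "loss l1 A ch t i \<le> loss l1 A ch t j + (2 * (real t - real (\<tau> i)) + 2)"
        using lossL[OF iK] lossL[OF jK] ix unfolding abs_le_iff by (elim conjE) argo
    qed
    define E where "E = 2 * (real t - real (\<tau> i)) + 2"
    have N0: "\<forall>i<K. 0 \<le> cnt ch s i" using cnt_nonneg by simp
    have Ns: "(\<Sum>i<K. cnt ch s i) = real s" by (rule cnt_sum[OF chs])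
    have lossN: "\<And>j. loss l1 A ch t j = l1 j + (\<Sum>k<K. cnt ch s k * A k j)"
      unfolding t_def by (rule loss_cnt[OF chs])
    have li: "l1 i + (\<Sum>k<K. cnt ch s k * A k i) \<le> (\<Sum>j<K. y j * (l1 j + (\<Sum>k<K. cnt ch s k * A k j))) + E"
    proof -
      have "(\<Sum>j<K. y j * (loss l1 A ch t i - E)) \<le> (\<Sum>j<K. y j * loss l1 A ch t j)"
        using key y0 unfolding E_def by (intro sum_mono mult_left_mono) (auto simp: algebra_simps)
      moreover have "(\<Sum>j<K. y j * (loss l1 A ch t i - E)) = loss l1 A ch t i - E"
        using y1 by (simp add: sum_distrib_right[symmetric])
      ultimately show ?thesis unfolding lossN by linarith
    qed
    have s0: "(0::real) \<le> real s" by simp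
    have st0: "real s * (W K A l1 (\<lambda>j. cnt ch s j + (if i = j then 1 else 0)) - W K A l1 (\<lambda>j. (real s + 1) * y j))
       \<le> (real s + 1) * (W K A l1 (cnt ch s) - W K A l1 (\<lambda>j. real s * y j)) + real s * (2 * B + 3/2 + E)"
      by (rule step_alg[OF sym psd Ab lb y0 y1 N0 Ns s0 iK li])
    have cM: "(\<lambda>j. cnt ch s j + (if i = j then 1 else 0)) = cnt ch t" unfolding t_def i_def by auto
    have rt: "real s + 1 = real t" unfolding t_def by simp
    have st: "real s * e t \<le> real t * e s + real s * (C + 2 * (real t - real (\<tau> i)))"
      using st0 unfolding cM rt e_def C_def E_def by (simp add: algebra_simps)
    have spos: "0 < real s" using sK K0 by simp
    have tpos: "0 < real t" unfolding t_def by simp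
    have div: "e t / real t \<le> e s / real s + (C + 2 * (real t - real (\<tau> i))) / real t"
    proof -
      have "e t / real t - e s / real s - (C + 2 * (real t - real (\<tau> i))) / real t
          = (real s * e t - real t * e s - real s * (C + 2 * (real t - real (\<tau> i)))) / (real s * real t)"
        using spos tpos by (simp add: field_simps)
      also have "\<dots> \<le> 0" using st spos tpos by (intro divide_nonpos_pos) auto
      finally show ?thesis by simp
    qed
    have l1t: "1 / real t \<le> ln (real t) - ln (real s)"
      using ln_diff_ge[of "real s" "real t"] spos unfolding t_def by simp
    have l2t: "(real t - real (\<tau> i)) / real t \<le> ln (real t) - ln (real (\<tau> i))"
      using ln_diff_ge[of "real (\<tau> i)" "real t"] \<tau>1[OF iK] \<tau>s[of i] unfolding t_def by simp
    have phi: "\<Phi> t - \<Phi> s = ln (real t) - ln (real (\<tau> i))"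
    proof -
      have "\<Phi> t - \<Phi> s = (\<Sum>j<K. (if i = j then ln (real t) - ln (real (\<tau> j)) else 0))"
        unfolding \<Phi>_def \<tau>_def sum_subtractf[symmetric] unfolding t_def i_def
        by (intro sum.cong) auto
      also have "\<dots> = ln (real t) - ln (real (\<tau> i))" using iK by simp
      finally show ?thesis .
    qed
    have "(C + 2 * (real t - real (\<tau> i))) / real t = C * (1 / real t) + 2 * ((real t - real (\<tau> i)) / real t)"
      using tpos by (simp add: field_simps)
    also have "\<dots> \<le> C * (ln (real t) - ln (real s)) + 2 * (\<Phi> t - \<Phi> s)"
      using l1t l2t C0 phi by (intro add_mono mult_left_mono) auto
    finally show "e (Suc s) / real (Suc s) \<le> e s / real s + C * (ln (real (Suc s)) - ln (real s)) + 2 * (\<Phi> (Suc s) - \<Phi> s)"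
      using div unfolding t_def by linarith
  qed
  have tel: "\<And>d. K + d \<le> T \<Longrightarrow> e (K+d) / real (K+d) \<le> e K / real K + C * (ln (real (K+d)) - ln (real K)) + 2 * (\<Phi> (K+d) - \<Phi> K)"
  proof -
    fix d show "K + d \<le> T \<Longrightarrow> e (K+d) / real (K+d) \<le> e K / real K + C * (ln (real (K+d)) - ln (real K)) + 2 * (\<Phi> (K+d) - \<Phi> K)"
    proof (induction d)
      case 0 then show ?case by simp
    next
      case (Suc d)
      have IH: "e (K+d) / real (K+d) \<le> e K / real K + C * (ln (real (K+d)) - ln (real K)) + 2 * (\<Phi> (K+d) - \<Phi> K)"
        using Suc by simp
      have "e (Suc (K+d)) / real (Suc (K+d)) \<le> e (K+d) / real (K+d) + C * (ln (real (Suc (K+d))) - ln (real (K+d))) + 2 * (\<Phi> (Suc (K+d)) - \<Phi> (K+d))"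
        using Suc.prems by (intro rec) auto
      with IH have "e (Suc (K+d)) / real (Suc (K+d)) \<le> e K / real K + C * (ln (real (Suc (K+d))) - ln (real K)) + 2 * (\<Phi> (Suc (K+d)) - \<Phi> K)"
        by (simp add: algebra_simps)
      then show ?case by simp
    qed
  qed
  have eK: "e K / real K \<le> 2 * B + real K - 1/2"
  proof -
    have chK': "\<forall>u\<in>{1..K}. ch u < K" using chK KT by auto
    have "W K A l1 (cnt ch K) = (\<Sum>t=1..K. loss l1 A ch t (ch t))"
      by (rule sum_loss_W[OF sym chK', symmetric])
    also have "\<dots> \<le> of_nat (card {1..K}) * (B + (real K - 1))"
    proof (rule sum_bounded_above)
      fix t assume t: "t \<in> {1..K}"
      have "loss l1 A ch t (ch t) \<le> B + real (t - 1)"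
        using t chK' Ab lb by (intro loss_bound[where K=K]) auto
      also have "real (t - 1) \<le> real K - 1" using t by (simp add: of_nat_diff)
      finally show "loss l1 A ch t (ch t) \<le> B + (real K - 1)" by simp
    qed
    finally have a: "W K A l1 (cnt ch K) \<le> real K * (B + (real K - 1))" by simp
    have b: "- real K * (B + 1/2) \<le> W K A l1 (\<lambda>j. real K * y j)"
      by (rule W_lower[OF psd Ab lb y0 y1]) simp
    have "e K \<le> real K * (2 * B + real K - 1/2)" using a b unfolding e_def by (simp add: algebra_simps)
    thus ?thesis using K0 by (simp add: pos_divide_le_eq mult.commute)
  qed
  have PhiT: "\<Phi> T \<le> real K * ln (real T)"
  proof -
    have "\<Phi> T \<le> of_nat (card {..<K}) * ln (real T)" unfolding \<Phi>_def
    proof (rule sum_bounded_above)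
      fix i assume "i \<in> {..<K}"
      then have "lp ch T i \<noteq> 0" using pulled KT by auto
      then show "ln (real (lp ch T i)) \<le> ln (real T)" using lp_le[of ch T i] by simp
    qed
    thus ?thesis by simp
  qed
  have PhiK: "0 \<le> \<Phi> K" unfolding \<Phi>_def
  proof (rule sum_nonneg)
    fix i assume "i \<in> {..<K}"
    then have "lp ch K i \<noteq> 0" using pulled by auto
    then show "0 \<le> ln (real (lp ch K i))" by simp
  qed
  have lnK: "0 \<le> C * ln (real K)" using C0 K0 by simp
  have lnT: "0 \<le> ln (real T)" using T0 by simp
  have "e T / real T \<le> e K / real K + C * (ln (real T) - ln (real K)) + 2 * (\<Phi> T - \<Phi> K)"
    using tel[of "T - K"] KT by simp
  also have "\<dots> \<le> 2 * B + real K + (C + 2 * real K) * ln (real T)"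
    using eK PhiT PhiK lnK by (simp add: algebra_simps)
  finally have eT: "e T \<le> real T * (2 * B + real K + (C + 2 * real K) * ln (real T))"
    using T0 by (simp add: pos_divide_le_eq mult.commute)
  have diff: "((5 * real K + 3) / 2 + 2 * B) * real T + (2 * real K + 2 * B + 4) * real T * ln (real T)
      - real T * (2 * B + real K + (C + 2 * real K) * ln (real T))
      = real T * ((3 * real K + 3) / 2 + ln (real T) / 2)"
    unfolding C_def by (simp add: algebra_simps)
  have "0 \<le> real T * ((3 * real K + 3) / 2 + ln (real T) / 2)" using lnT by simp
  then show ?thesis unfolding reg B_def[symmetric] using eT diff by linarith
qed

end
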